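(* Let $p\ge 5$ be a prime and let $N=\frac{1}{0}$ (the north pole) be a vertex of the level $p$ Farey map $\mathcal{M}_3(p)$. Define the finite sequence of vertices $$S=S(p)=\frac{1}{(p-1)/2},\ \frac{1}{(p-3)/2},\ \dots,\ \frac{1}{3},\ \frac{1}{2},\ \frac{2}{3},\ \frac{3}{4},\ \dots,\ \frac{(p-3)/2}{(p-1)/2},$$ i.e. first the terms $\frac{1}{k}$ for $k=\frac{p-1}{2},\frac{p-3}{2},\dots,2$ (decreasing), followed by the terms $\frac{m-1}{m}$ for $m=3,4,\dots,\frac{p-1}{2}$ (increasing). For $k\in\mathbb{Z}$ let $S+k$ denote the sequence obtained by replacing each term $\frac{x}{c}$ of $S$ by $\frac{x}{c}+k:=\frac{x+kc}{c}$. Let $S_2(p)$ be the concatenation $S\,(S+1)\,(S+2)\cdots(S+p-1)$, and let $S_1(p)$ be the sequence $\frac{0}{1},\frac{1}{1},\dots,\frac{p-1}{1}$. Then: (i) every term of $S_2(p)$ is a vertex at graph-theoretic distance exactly $2$ from $N$ in $\mathcal{M}_3(p)$, and every vertex at distance $2$ from $N$ occurs in $S_2(p)$; (ii) $S_2(p)$ is a Farey circuit, i.e. each term is joined by an edge of $\mathcal{M}_3(p)$ to the next term, and the last term is joined by an edge to the first term; (iii) $S_1(p)$ is a Farey circuit of length $p$ consisting of the vertices at distance $1$ from $N$, and $S_2(p)$ has length $p(p-4)$; (iv) $\mathcal{M}_3(p)$ has exactly $\frac{p-1}{2}$ poles.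
   Context: The Farey map $\mathcal{M}_3$ has vertex set $\mathbb{Q}\cup\{\infty\}$ with $\infty=\frac10$, two reduced fractions $\frac ac,\frac bd$ being joined by an edge iff $ad-bc=\pm1$; the modular group $\Gamma=\mathrm{PSL}(2,\mathbb{Z})$ acts on it by Möbius transformations. For $n\ge2$, $\mathcal{M}_3(n)=\mathcal{M}_3/\Gamma(n)$ is the quotient by the principal congruence subgroup $\Gamma(n)$. Concretely, for $p$ prime, the vertices of $\mathcal{M}_3(p)$ are the "Farey fractions" $\frac{a}{c}$ with $a,c\in\mathbb{Z}_p$ not both zero, where $\frac{a}{c}$ and $\frac{-a}{-c}$ denote the same vertex (so $\frac{a}{c}$ is the image of a fraction in $\mathcal{M}_3$ with numerator $\equiv a$ and denominator $\equiv c$ mod $p$), and two vertices $\frac ac,\frac bd$ are joined by an edge iff $ad-bc\equiv\pm1 \pmod p$. The graph-theoretic distance between two vertices is the length of a shortest edge path joining them. A Farey circuit is a sequence $f_1,\dots,f_k$ of vertices with $f_i$ joined by an edge to $f_{i+1}$, indices taken mod $k$ (terms may repeat). A pole is a vertex of the form $\frac{a}{0}$ (with $a\neq 0$). *)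

theory Defs
  imports "HOL-Computational_Algebra.Primes"
begin

text \<open>A vertex of M_3(p): the Farey fraction a/c with a, c taken mod p, identified
  with (-a)/(-c).  Represented as the set of its (at most two) residue representatives.\<close>
definition fvert :: "int \<Rightarrow> int \<Rightarrow> int \<Rightarrow> (int \<times> int) set" where
  "fvert p a c = {(a mod p, c mod p), ((- a) mod p, (- c) mod p)}"

definition fverts :: "int \<Rightarrow> (int \<times> int) set set" where
  "fverts p = {fvert p a c | a c. \<not> (a mod p = 0 \<and> c mod p = 0)}"

definition fadj :: "int \<Rightarrow> (int \<times> int) set \<Rightarrow> (int \<times> int) set \<Rightarrow> bool" where
  "fadj p u v \<longleftrightarrow> u \<in> fverts p \<and> v \<in> fverts p \<and>
     (\<exists>a c b d. u = fvert p a c \<and> v = fvert p b d \<and>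
        ((a * d - b * c) mod p = 1 mod p \<or> (a * d - b * c) mod p = (- 1) mod p))"

definition fwalk :: "int \<Rightarrow> nat \<Rightarrow> (int \<times> int) set \<Rightarrow> (int \<times> int) set \<Rightarrow> bool" where
  "fwalk p n u v \<longleftrightarrow> (\<exists>xs. length xs = Suc n \<and> set xs \<subseteq> fverts p \<and> hd xs = u \<and> last xs = v
       \<and> (\<forall>i < n. fadj p (xs ! i) (xs ! Suc i)))"

definition fdist_is :: "int \<Rightarrow> (int \<times> int) set \<Rightarrow> (int \<times> int) set \<Rightarrow> nat \<Rightarrow> bool" where
  "fdist_is p u v n \<longleftrightarrow> fwalk p n u v \<and> (\<forall>m < n. \<not> fwalk p m u v)"

definition farey_circuit :: "int \<Rightarrow> (int \<times> int) set list \<Rightarrow> bool" where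
  "farey_circuit p xs \<longleftrightarrow> xs \<noteq> [] \<and> set xs \<subseteq> fverts p \<and>
     (\<forall>i < length xs. fadj p (xs ! i) (xs ! ((Suc i) mod length xs)))"

definition is_pole :: "int \<Rightarrow> (int \<times> int) set \<Rightarrow> bool" where
  "is_pole p v \<longleftrightarrow> (\<exists>a. a mod p \<noteq> 0 \<and> v = fvert p a 0)"

definition Spairs :: "int \<Rightarrow> (int \<times> int) list" where
  "Spairs p = map (\<lambda>k. (1, k)) (rev [2..(p - 1) div 2]) @ map (\<lambda>m. (m - 1, m)) [3..(p - 1) div 2]"

definition S2 :: "int \<Rightarrow> (int \<times> int) set list" where
  "S2 p = concat (map (\<lambda>k. map (\<lambda>(x, c). fvert p (x + k * c) c) (Spairs p)) [0..p - 1])"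

definition S1 :: "int \<Rightarrow> (int \<times> int) set list" where
  "S1 p = map (\<lambda>a. fvert p a 1) [0..p - 1]"

end

theory Submission
  imports Defs "HOL-Number_Theory.Cong"
begin


lemma fvert_mod: "fvert p (a mod p) (c mod p) = fvert p a c"
  unfolding fvert_def by (simp add: mod_minus_eq)

lemma fvert_neg: "fvert p (-a) (-c) = fvert p a c"
  unfolding fvert_def by auto

lemma fvert_eq_iff: "fvert p a c = fvert p b d \<longleftrightarrow>
   ([a = b] (mod p) \<and> [c = d] (mod p)) \<or> ([-a = b] (mod p) \<and> [-c = d] (mod p))"
proof
  assume h: "fvert p a c = fvert p b d"
  have "(b mod p, d mod p) \<in> fvert p b d" unfolding fvert_def by simp
  then have "(b mod p, d mod p) \<in> fvert p a c" using h by simp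
  then show "([a = b] (mod p) \<and> [c = d] (mod p)) \<or> ([-a = b] (mod p) \<and> [-c = d] (mod p))"
    unfolding fvert_def cong_def by auto
next
  assume "([a = b] (mod p) \<and> [c = d] (mod p)) \<or> ([-a = b] (mod p) \<and> [-c = d] (mod p))"
  then show "fvert p a c = fvert p b d"
  proof
    assume "[a = b] (mod p) \<and> [c = d] (mod p)"
    then show ?thesis by (metis cong_def fvert_mod)
  next
    assume "[-a = b] (mod p) \<and> [-c = d] (mod p)"
    then show ?thesis by (metis cong_def fvert_mod fvert_neg)
  qed
qed

lemma fvert_eq_sign: "fvert p a c = fvert p a' c' \<Longrightarrow>
   \<exists>s. (s = 1 \<or> s = -1) \<and> p dvd (a - s*a') \<and> p dvd (c - s*c')"
proof -
  assume "fvert p a c = fvert p a' c'"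
  then have "([a = a'] (mod p) \<and> [c = c'] (mod p)) \<or> ([-a = a'] (mod p) \<and> [-c = c'] (mod p))"
    by (simp add: fvert_eq_iff)
  then show ?thesis
  proof
    assume "[a = a'] (mod p) \<and> [c = c'] (mod p)"
    then show ?thesis by (intro exI[of _ 1]) (simp add: cong_iff_dvd_diff)
  next
    assume h: "[-a = a'] (mod p) \<and> [-c = c'] (mod p)"
    have "p dvd (-a - a')" "p dvd (-c - c')" using h by (auto simp: cong_iff_dvd_diff)
    have "a + a' = -(-a - a')" "c + c' = -(-c - c')" by simp_all
    then have "p dvd (a + a')" "p dvd (c + c')" using \<open>p dvd (-a - a')\<close> \<open>p dvd (-c - c')\<close>
      by (simp_all only: dvd_minus_iff)
    then show ?thesis by (intro exI[of _ "-1"]) simp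
  qed
qed

lemma fverts_iff:
  "fvert p a c \<in> fverts p \<longleftrightarrow> \<not> (p dvd a \<and> p dvd c)"
proof
  assume "fvert p a c \<in> fverts p"
  then obtain a' c' where e: "fvert p a c = fvert p a' c'" and nz: "\<not> (a' mod p = 0 \<and> c' mod p = 0)"
    unfolding fverts_def by blast
  obtain s where s: "s = 1 \<or> s = -1" "p dvd (a - s*a')" "p dvd (c - s*c')"
    using fvert_eq_sign[OF e] by blast
  show "\<not> (p dvd a \<and> p dvd c)"
  proof
    assume "p dvd a \<and> p dvd c"
    then have "p dvd a - (a - s*a')" "p dvd c - (c - s*c')" using s by (simp_all only: dvd_diff)
    then have "p dvd s*a'" "p dvd s*c'" by simp_all
    then have "p dvd a'" "p dvd c'" using s(1) by auto
    then show False using nz by auto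
  qed
next
  assume "\<not> (p dvd a \<and> p dvd c)"
  then show "fvert p a c \<in> fverts p" unfolding fverts_def by auto
qed

lemma det_dvd:
  fixes p a c b d s t a' c' b' d' :: int
  assumes "p dvd (a - s*a')" "p dvd (c - s*c')" "p dvd (b - t*b')" "p dvd (d - t*d')"
  shows "p dvd ((a*d - b*c) - (s*t)*(a'*d' - b'*c'))"
proof -
  have "(a*d - b*c) - (s*t)*(a'*d' - b'*c') = (a - s*a')*d + s*a'*(d - t*d') - (b - t*b')*c - t*b'*(c - s*c')"
    by (simp add: algebra_simps)
  moreover have "p dvd (a - s*a')*d + s*a'*(d - t*d') - (b - t*b')*c - t*b'*(c - s*c')"
  proof -
    have 1: "p dvd (a - s*a')*d" using assms(1) by (rule dvd_mult2)
    have 2: "p dvd s*a'*(d - t*d')" using assms(4) by (rule dvd_mult)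
    have 3: "p dvd (b - t*b')*c" using assms(3) by (rule dvd_mult2)
    have 4: "p dvd t*b'*(c - s*c')" using assms(2) by (rule dvd_mult)
    show ?thesis by (rule dvd_diff[OF dvd_diff[OF dvd_add[OF 1 2] 3] 4])
  qed
  ultimately show ?thesis by (simp only:)
qed

definition detc :: "int \<Rightarrow> int \<Rightarrow> int \<Rightarrow> int \<Rightarrow> int \<Rightarrow> bool" where
  "detc p a c b d \<longleftrightarrow> p dvd (a*d - b*c - 1) \<or> p dvd (a*d - b*c + 1)"

lemma fadj_iff: "fadj p (fvert p a c) (fvert p b d) \<longleftrightarrow>
   fvert p a c \<in> fverts p \<and> fvert p b d \<in> fverts p \<and> detc p a c b d"
proof
  assume "fadj p (fvert p a c) (fvert p b d)"
  then obtain a' c' b' d' where m: "fvert p a c \<in> fverts p" "fvert p b d \<in> fverts p"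
    and e1: "fvert p a c = fvert p a' c'" and e2: "fvert p b d = fvert p b' d'"
    and dd: "(a' * d' - b' * c') mod p = 1 mod p \<or> (a' * d' - b' * c') mod p = (- 1) mod p"
    unfolding fadj_def by blast
  obtain s where s: "s = 1 \<or> s = -1" "p dvd (a - s*a')" "p dvd (c - s*c')"
    using fvert_eq_sign[OF e1] by blast
  obtain t where t: "t = 1 \<or> t = -1" "p dvd (b - t*b')" "p dvd (d - t*d')"
    using fvert_eq_sign[OF e2] by blast
  have D: "p dvd ((a*d - b*c) - (s*t)*(a'*d' - b'*c'))" by (rule det_dvd[OF s(2) s(3) t(2) t(3)])
  obtain e where e: "e = 1 \<or> e = -1" "p dvd (a'*d' - b'*c' - e)"
    using dd unfolding mod_eq_dvd_iff by blast
  have E: "p dvd (s*t)*(a'*d' - b'*c' - e)" by (rule dvd_mult[OF e(2)])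
  have "(a*d - b*c) - (s*t)*(a'*d' - b'*c') + (s*t)*(a'*d' - b'*c' - e) = a*d - b*c - s*t*e"
    by (simp add: algebra_simps)
  then have X: "p dvd (a*d - b*c - s*t*e)" using dvd_add[OF D E] by (simp only:)
  have "s*t*e = 1 \<or> s*t*e = -1" using s(1) t(1) e(1) by auto
  then have "detc p a c b d" using X unfolding detc_def
    by (metis diff_minus_eq_add)
  then show "fvert p a c \<in> fverts p \<and> fvert p b d \<in> fverts p \<and> detc p a c b d" using m by blast
next
  assume h: "fvert p a c \<in> fverts p \<and> fvert p b d \<in> fverts p \<and> detc p a c b d"
  then have "(a * d - b * c) mod p = 1 mod p \<or> (a * d - b * c) mod p = (- 1) mod p"
    unfolding detc_def mod_eq_dvd_iff by simp
  then show "fadj p (fvert p a c) (fvert p b d)" using h unfolding fadj_def by blast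
qed


lemma fadj_in: "fadj p u v \<Longrightarrow> u \<in> fverts p \<and> v \<in> fverts p"
  unfolding fadj_def by blast

lemma fwalk0: "fwalk p 0 u v \<longleftrightarrow> u = v \<and> u \<in> fverts p"
proof
  assume "fwalk p 0 u v"
  then obtain xs where "length xs = Suc 0" "set xs \<subseteq> fverts p" "hd xs = u" "last xs = v"
    unfolding fwalk_def by blast
  then show "u = v \<and> u \<in> fverts p" by (auto simp: length_Suc_conv)
next
  assume "u = v \<and> u \<in> fverts p"
  then show "fwalk p 0 u v" unfolding fwalk_def by (intro exI[of _ "[u]"]) auto
qed

lemma fwalk1: "fwalk p 1 u v \<longleftrightarrow> fadj p u v"
proof
  assume "fwalk p 1 u v"
  then obtain xs where "length xs = Suc (Suc 0)" "hd xs = u" "last xs = v"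
     "\<forall>i < 1. fadj p (xs ! i) (xs ! Suc i)"
    unfolding fwalk_def by auto
  then show "fadj p u v" by (auto simp: length_Suc_conv)
next
  assume "fadj p u v"
  then show "fwalk p 1 u v" unfolding fwalk_def using fadj_in[of p u v]
    by (intro exI[of _ "[u,v]"]) auto
qed

lemma fwalk2: "fwalk p 2 u v \<longleftrightarrow> (\<exists>w. fadj p u w \<and> fadj p w v)"
proof
  assume "fwalk p 2 u v"
  then obtain xs where "length xs = Suc (Suc (Suc 0))" "hd xs = u" "last xs = v"
     and H: "\<forall>i < 2. fadj p (xs ! i) (xs ! Suc i)"
    unfolding fwalk_def by (auto simp: numeral_eq_Suc)
  have H0: "fadj p (xs!0) (xs!Suc 0)" "fadj p (xs!1) (xs!Suc 1)" using H by auto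
  moreover obtain a b c where "xs = [a,b,c]"
    using \<open>length xs = Suc (Suc (Suc 0))\<close> by (auto simp: length_Suc_conv)
  ultimately have "fadj p a b" "fadj p b c" "a = u" "c = v"
    using H0 \<open>hd xs = u\<close> \<open>last xs = v\<close> by simp_all
  then show "\<exists>w. fadj p u w \<and> fadj p w v" by blast
next
  assume "\<exists>w. fadj p u w \<and> fadj p w v"
  then obtain w where "fadj p u w" "fadj p w v" by blast
  then show "fwalk p 2 u v" unfolding fwalk_def using fadj_in[of p u w] fadj_in[of p w v]
    by (intro exI[of _ "[u,w,v]"]) (auto simp: less_Suc_eq numeral_eq_Suc)
qed

lemma fdist1: "fdist_is p u v 1 \<longleftrightarrow> fadj p u v \<and> u \<noteq> v"
proof -
  have "(\<forall>m<(1::nat). \<not> fwalk p m u v) \<longleftrightarrow> \<not> fwalk p 0 u v" by auto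
  then have "fdist_is p u v 1 \<longleftrightarrow> fadj p u v \<and> \<not> (u = v \<and> u \<in> fverts p)"
    unfolding fdist_is_def by (simp only: fwalk1 fwalk0)
  then show ?thesis using fadj_in[of p u v] by blast
qed

lemma fdist2: "fdist_is p u v 2 \<longleftrightarrow> (\<exists>w. fadj p u w \<and> fadj p w v) \<and> \<not> fadj p u v \<and> u \<noteq> v"
proof -
  have "(\<forall>m<(2::nat). \<not> fwalk p m u v) \<longleftrightarrow> \<not> fwalk p 0 u v \<and> \<not> fwalk p 1 u v"
    by (auto simp: less_Suc_eq numeral_eq_Suc)
  then have "fdist_is p u v 2 \<longleftrightarrow> (\<exists>w. fadj p u w \<and> fadj p w v) \<and> \<not> (u = v \<and> u \<in> fverts p) \<and> \<not> fadj p u v"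
    unfolding fdist_is_def by (simp only: fwalk2 fwalk1 fwalk0)
  then show ?thesis using fadj_in[of p u] by blast
qed


lemma not_dvd_small: "(p::int) \<ge> 5 \<Longrightarrow> \<not> p dvd 1 \<and> \<not> p dvd (-1) \<and> \<not> p dvd 2 \<and> \<not> p dvd (-2)"
  by (auto dest!: zdvd_imp_le)

lemma inv_ex: assumes "prime (p::int)" "\<not> p dvd c" shows "\<exists>c'. p dvd (c*c' - 1)"
proof -
  have "coprime c p" using assms by (metis coprime_commute prime_imp_coprime)
  then obtain c' where "[c*c' = 1] (mod p)" using cong_solve_coprime_int by blast
  then show ?thesis by (auto simp: cong_iff_dvd_diff)
qed

lemma pm1: "(p::int) dvd x - 1 \<or> p dvd x + 1 \<Longrightarrow> \<exists>s. (s = 1 \<or> s = -1) \<and> p dvd x - s"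
  by (metis diff_minus_eq_add)

lemma N_in: "(p::int) \<ge> 5 \<Longrightarrow> fvert p 1 0 \<in> fverts p"
  using not_dvd_small by (simp add: fverts_iff)

lemma dist2_fwd:
  assumes "prime (p::int)" "p \<ge> 5" "\<not> p dvd c" "\<not> p dvd (c-1)" "\<not> p dvd (c+1)"
  shows "fdist_is p (fvert p 1 0) (fvert p x c) 2"
proof -
  obtain c' where c': "p dvd (c*c' - 1)" using inv_ex assms by blast
  define b where "b = (x-1)*c'"
  have v: "fvert p x c \<in> fverts p" using assms by (simp add: fverts_iff)
  have w: "fvert p b 1 \<in> fverts p" using not_dvd_small[OF assms(2)] by (simp add: fverts_iff)
  have a1: "fadj p (fvert p 1 0) (fvert p b 1)"
    using N_in[OF assms(2)] w by (simp add: fadj_iff detc_def)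
  have "b*c - x*1 + 1 = (x-1)*(c*c' - 1)" by (simp add: b_def algebra_simps)
  then have "p dvd (b*c - x*1 + 1)" using c' by simp
  then have a2: "fadj p (fvert p b 1) (fvert p x c)"
    using v w by (simp add: fadj_iff detc_def)
  have n1: "\<not> fadj p (fvert p 1 0) (fvert p x c)"
    using assms(4,5) by (simp add: fadj_iff detc_def)
  have n0: "fvert p 1 0 \<noteq> fvert p x c"
    using assms(3) by (auto simp: fvert_eq_iff cong_iff_dvd_diff)
  show ?thesis using a1 a2 n1 n0 by (auto simp: fdist2)
qed

lemma fverts_obtain: "v \<in> fverts p \<Longrightarrow> \<exists>x c. v = fvert p x c \<and> \<not> (p dvd x \<and> p dvd c)"
  unfolding fverts_def by (auto simp: dvd_eq_mod_eq_0)

lemma dist2_bwd: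
  assumes "prime (p::int)" "p \<ge> 5" "v \<in> fverts p" "fdist_is p (fvert p 1 0) v 2"
  shows "\<exists>x c. v = fvert p x c \<and> \<not> p dvd c \<and> \<not> p dvd (c-1) \<and> \<not> p dvd (c+1)"
proof -
  obtain x c where v: "v = fvert p x c" "\<not> (p dvd x \<and> p dvd c)" using fverts_obtain assms(3) by blast
  have d2: "\<exists>w. fadj p (fvert p 1 0) w \<and> fadj p w v" "\<not> fadj p (fvert p 1 0) v" "fvert p 1 0 \<noteq> v"
    using assms(4) by (auto simp: fdist2)
  have c1: "\<not> p dvd (c-1) \<and> \<not> p dvd (c+1)"
    using d2(2) assms(3) N_in[OF assms(2)] v(1) by (auto simp: fadj_iff detc_def)
  have c0: "\<not> p dvd c"
  proof
    assume pc: "p dvd c"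
    obtain w where w: "fadj p (fvert p 1 0) w" "fadj p w v" using d2(1) by blast
    obtain b d where bd: "w = fvert p b d" using fverts_obtain fadj_in w(1) by blast
    have "p dvd d - 1 \<or> p dvd d + 1"
      using w(1) unfolding bd by (simp add: fadj_iff detc_def)
    then obtain s where s: "s = 1 \<or> s = -1" "p dvd (d - s)" using pm1 by blast
    have "p dvd (b*c - x*d) - 1 \<or> p dvd (b*c - x*d) + 1"
      using w(2) unfolding bd v(1) by (simp add: fadj_iff detc_def)
    then obtain e where e: "e = 1 \<or> e = -1" "p dvd (b*c - x*d - e)" using pm1 by blast
    have "x*s + e = b*c - (b*c - x*d - e) - x*(d - s)" by (simp add: algebra_simps)
    moreover have "p dvd (b*c - (b*c - x*d - e) - x*(d - s))" 
      by (rule dvd_diff[OF dvd_diff[OF dvd_mult[OF pc] e(2)] dvd_mult[OF s(2)]])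
    ultimately have "p dvd (x*s + e)" by (simp only:)
    moreover have "x*s + e = x - 1 \<or> x*s+e = x+1 \<or> x*s + e = -(x-1) \<or> x*s+e = -(x+1)"
      using s(1) e(1) by auto
    ultimately have "p dvd (x - 1) \<or> p dvd (x + 1)" by (metis dvd_minus_iff)
    moreover have "1 - x = -(x - 1)" "-1 - x = -(x+1)" "0 - c = - c" "-0 - c = -c" by simp_all
    ultimately have "[1 = x] (mod p) \<and> [0 = c] (mod p) \<or> [-1 = x] (mod p) \<and> [-0 = c] (mod p)"
      using pc unfolding cong_iff_dvd_diff by (metis dvd_minus_iff)
    then have "fvert p 1 0 = v" unfolding v(1) fvert_eq_iff .
    then show False using d2(3) by blast
  qed
  show ?thesis using v c0 c1 by blast
qed


lemma small_ndvd: "(p::int) dvd y \<Longrightarrow> 0 < y \<Longrightarrow> y < p \<Longrightarrow> False"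
  using zdvd_imp_le by fastforce

lemma fadjI: "\<not> (p dvd a \<and> p dvd c) \<Longrightarrow> \<not> (p dvd b \<and> p dvd d) \<Longrightarrow>
   p dvd (a*d - b*c - 1) \<or> p dvd (a*d - b*c + 1) \<Longrightarrow> fadj p (fvert p a c) (fvert p b d)"
  by (simp add: fadj_iff fverts_iff detc_def)

lemma set_S2: "v \<in> set (S2 p) \<longleftrightarrow> (\<exists>k\<in>{0..p-1}. \<exists>x c. (x,c) \<in> set (Spairs p) \<and> v = fvert p (x + k*c) c)"
  unfolding S2_def by auto

lemma set_Spairs: "(x,c) \<in> set (Spairs p) \<Longrightarrow> 2 \<le> c \<and> c \<le> (p-1) div 2"
  unfolding Spairs_def by auto

lemma one_in: "2 \<le> c \<Longrightarrow> c \<le> (p-1) div 2 \<Longrightarrow> (1,c) \<in> set (Spairs p)"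
  unfolding Spairs_def by auto

lemma hbound: assumes "prime (p::int)" "p \<ge> 5" shows "p = 2*((p-1) div 2) + 1" "(p-1) div 2 \<ge> 2"
proof -
  have "odd p" using prime_odd_int assms by auto
  then have "p mod 2 = 1" by (simp add: odd_iff_mod_2_eq_one)
  then show "p = 2*((p-1) div 2) + 1" by presburger
  then show "(p-1) div 2 \<ge> 2" using assms by linarith
qed

lemma S2_fwd:
  assumes "prime (p::int)" "p \<ge> 5" "v \<in> set (S2 p)"
  shows "v \<in> fverts p \<and> fdist_is p (fvert p 1 0) v 2"
proof -
  obtain k x c where v: "v = fvert p (x + k*c) c" and c: "2 \<le> c" "c \<le> (p-1) div 2"
    using assms(3) set_Spairs unfolding set_S2 by blast
  have hp: "p = 2*((p-1) div 2) + 1" using hbound assms by blast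
  have n: "\<not> p dvd c" "\<not> p dvd (c-1)" "\<not> p dvd (c+1)"
  proof -
    have "0 < c" "c < p" "0 < c - 1" "c - 1 < p" "0 < c + 1" "c + 1 < p" using c hp by linarith+
    then show "\<not> p dvd c" "\<not> p dvd (c-1)" "\<not> p dvd (c+1)"
      using small_ndvd[of p c] small_ndvd[of p "c-1"] small_ndvd[of p "c+1"] by blast+
  qed
  show ?thesis using dist2_fwd[OF assms(1,2) n] n(1) unfolding v by (simp add: fverts_iff)
qed

lemma S2_core:
  assumes "prime (p::int)" "p \<ge> 5" "2 \<le> r" "r \<le> (p-1) div 2" "p dvd (c - r)"
  shows "fvert p x c \<in> set (S2 p)"
proof -
  have hp: "p = 2*((p-1) div 2) + 1" using hbound assms by blast
  have "0 < r" "r < p" using assms hp by linarith+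
  then have "\<not> p dvd r" using small_ndvd[of p r] by blast
  then obtain r' where r': "p dvd (r*r' - 1)" using inv_ex assms(1) by blast
  define k where "k = ((x-1)*r') mod p"
  have "0 \<le> k" "k < p" unfolding k_def using assms(2) by simp_all
  then have k: "k \<in> {0..p-1}" by simp
  have "x - (1 + k*r) = (x-1)*(-(r*r' - 1)) + ((x-1)*r' - k)*r" by (simp add: algebra_simps)
  moreover have "p dvd (x-1)*(-(r*r' - 1)) + ((x-1)*r' - k)*r"
  proof -
    have 1: "p dvd (x-1)*(-(r*r' - 1))" using r' by (simp only: dvd_minus_iff dvd_mult)
    have 2: "p dvd ((x-1)*r' - k)" unfolding k_def by (rule dvd_minus_mod)
    show ?thesis by (rule dvd_add[OF 1 dvd_mult2[OF 2]])
  qed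
  ultimately have "p dvd x - (1 + k*r)" by (simp only:)
  then have "fvert p x c = fvert p (1 + k*r) r" using assms(5) by (simp add: fvert_eq_iff cong_iff_dvd_diff)
  then show ?thesis unfolding set_S2 using k one_in[OF assms(3,4)] by blast
qed

lemma S2_mem:
  assumes "prime (p::int)" "p \<ge> 5" "\<not> p dvd c" "\<not> p dvd (c-1)" "\<not> p dvd (c+1)"
  shows "fvert p x c \<in> set (S2 p)"
proof -
  have hp: "p = 2*((p-1) div 2) + 1" using hbound assms by blast
  define r where "r = c mod p"
  have r: "0 \<le> r" "r < p" using assms(2) unfolding r_def by simp_all
  have pr: "p dvd c - r" unfolding r_def by simp
  have "r \<noteq> 0" using pr assms(3) by auto
  moreover have "r \<noteq> 1" using pr assms(4) by auto
  moreover have "r \<noteq> p - 1"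
  proof
    assume "r = p - 1"
    then have "c + 1 = (c - r) + p" by simp
    then show False using pr assms(5) by (metis dvd_add dvd_refl)
  qed
  ultimately have r2: "2 \<le> r" "r \<le> p - 2" using r by auto
  show ?thesis
  proof (cases "r \<le> (p-1) div 2")
    case True
    show ?thesis by (rule S2_core[OF assms(1,2) r2(1) True pr])
  next
    case False
    have a: "2 \<le> p - r" "p - r \<le> (p-1) div 2" using False r2 hp by linarith+
    have "-c - (p - r) = -(c - r) - p" by simp
    then have "p dvd -c - (p - r)" using pr by (metis dvd_diff dvd_minus_iff dvd_refl)
    then have "fvert p (-x) (-c) \<in> set (S2 p)" using S2_core[OF assms(1,2) a] by blast
    then show ?thesis by (simp add: fvert_neg)
  qed
qed

lemma S2_bwd:
  assumes "prime (p::int)" "p \<ge> 5" "v \<in> fverts p" "fdist_is p (fvert p 1 0) v 2"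
  shows "v \<in> set (S2 p)"
  using dist2_bwd[OF assms] S2_mem[OF assms(1,2)] by blast


lemma S1_len: "p \<ge> 0 \<Longrightarrow> length (S1 p) = nat p"
  unfolding S1_def by simp

lemma S1_nth: "i < nat p \<Longrightarrow> S1 p ! i = fvert p (int i) 1"
  unfolding S1_def by simp

lemma set_S1: "set (S1 p) = (\<lambda>a. fvert p a 1) ` {0..p-1}"
  unfolding S1_def by simp

lemma S1_circuit:
  assumes "prime (p::int)" "p \<ge> 5"
  shows "farey_circuit p (S1 p)"
proof -
  have nd1: "\<not> p dvd 1" using not_dvd_small assms(2) by blast
  have ne: "S1 p \<noteq> []" using S1_len[of p] assms by auto
  have sub: "set (S1 p) \<subseteq> fverts p" unfolding set_S1 using nd1 by (auto simp: fverts_iff)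
  have adj: "fadj p (S1 p ! i) (S1 p ! (Suc i mod length (S1 p)))" if i: "i < length (S1 p)" for i
  proof -
    have L: "length (S1 p) = nat p" using S1_len assms by simp
    show ?thesis
    proof (cases "Suc i < nat p")
      case True
      then have "Suc i mod length (S1 p) = Suc i" using L by simp
      then show ?thesis using True L i nd1 by (simp add: S1_nth fadjI)
    next
      case False
      then have "Suc i = nat p" using i L by simp
      then have e: "Suc i mod length (S1 p) = 0" "int i = p - 1" using L assms by simp_all
      have "p dvd (int i * 1 - 0 * 1 + 1)" using e by simp
      then show ?thesis using e(1) L i nd1 assms by (simp add: S1_nth fadjI)
    qed
  qed
  show ?thesis unfolding farey_circuit_def using ne sub adj by blast
qed

lemma S1_set:
  assumes "prime (p::int)" "p \<ge> 5"
  shows "set (S1 p) = {v \<in> fverts p. fdist_is p (fvert p 1 0) v 1}"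
proof -
  have nd1: "\<not> p dvd 1" "\<not> p dvd -1" using not_dvd_small assms(2) by blast+
  have NI: "fvert p 1 0 \<in> fverts p" using N_in assms by blast
  show ?thesis
  proof
    show "set (S1 p) \<subseteq> {v \<in> fverts p. fdist_is p (fvert p 1 0) v 1}"
    proof
      fix v assume "v \<in> set (S1 p)"
      then obtain a where v: "v = fvert p a 1" unfolding set_S1 by blast
      have vf: "v \<in> fverts p" using nd1 unfolding v by (simp add: fverts_iff)
      have "fadj p (fvert p 1 0) v" using nd1 unfolding v by (intro fadjI) simp_all
      moreover have "fvert p 1 0 \<noteq> v" using nd1 unfolding v by (simp add: fvert_eq_iff cong_iff_dvd_diff)
      ultimately show "v \<in> {v \<in> fverts p. fdist_is p (fvert p 1 0) v 1}" using vf fdist1[of p "fvert p 1 0" v] by blast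
    qed
  next
    show "{v \<in> fverts p. fdist_is p (fvert p 1 0) v 1} \<subseteq> set (S1 p)"
    proof
      fix v assume "v \<in> {v \<in> fverts p. fdist_is p (fvert p 1 0) v 1}"
      then have vf: "v \<in> fverts p" and a: "fadj p (fvert p 1 0) v" using fdist1[of p "fvert p 1 0" v] by blast+
      obtain x c where v: "v = fvert p x c" using fverts_obtain vf by blast
      have "p dvd c - 1 \<or> p dvd c + 1" using a unfolding v by (simp add: fadj_iff detc_def)
      then show "v \<in> set (S1 p)"
      proof
        assume h: "p dvd c - 1"
        have "v = fvert p (x mod p) 1" unfolding v using h by (simp add: fvert_eq_iff cong_def mod_eq_dvd_iff)
        moreover have "x mod p \<in> {0..p-1}" using pos_mod_bound[of p x] pos_mod_sign[of p x] assms(2) by auto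
        ultimately show ?thesis unfolding set_S1 by blast
      next
        assume h: "p dvd c + 1"
        have "-c - 1 = -(c+1)" by simp
        then have h': "p dvd -c - 1" using h by (simp only: dvd_minus_iff)
        have "v = fvert p ((-x) mod p) 1" unfolding v using h' by (simp add: fvert_eq_iff cong_def mod_eq_dvd_iff)
        moreover have "(-x) mod p \<in> {0..p-1}" using pos_mod_bound[of p "-x"] pos_mod_sign[of p "-x"] assms(2) by auto
        ultimately show ?thesis unfolding set_S1 by blast
      qed
    qed
  qed
qed

lemma poles:
  assumes "prime (p::int)" "p \<ge> 5"
  shows "int (card {v \<in> fverts p. is_pole p v}) = (p - 1) div 2"
proof -
  define h where "h = (p-1) div 2"
  have hp: "p = 2*h + 1" "h \<ge> 2" using hbound[OF assms] unfolding h_def by simp_all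
  have eq: "{v \<in> fverts p. is_pole p v} = (\<lambda>a. fvert p a 0) ` {1..h}"
  proof
    show "{v \<in> fverts p. is_pole p v} \<subseteq> (\<lambda>a. fvert p a 0) ` {1..h}"
    proof
      fix v assume "v \<in> {v \<in> fverts p. is_pole p v}"
      then obtain a where a: "a mod p \<noteq> 0" "v = fvert p a 0" unfolding is_pole_def by blast
      define r where "r = a mod p"
      have "0 \<le> r" "r < p" "r \<noteq> 0" using a(1) assms(2) unfolding r_def by simp_all
      then have r: "1 \<le> r" "r \<le> p - 1" by linarith+
      have pr: "p dvd a - r" unfolding r_def by simp
      show "v \<in> (\<lambda>a. fvert p a 0) ` {1..h}"
      proof (cases "r \<le> h")
        case True
        have "v = fvert p r 0" unfolding a(2) using pr by (simp add: fvert_eq_iff cong_iff_dvd_diff)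
        then show ?thesis using True r by auto
      next
        case False
        have "-a - (p - r) = -(a - r) - p" by simp
        then have "p dvd -a - (p - r)" using pr by (metis dvd_diff dvd_minus_iff dvd_refl)
        then have "v = fvert p (p - r) 0" unfolding a(2) by (simp add: fvert_eq_iff cong_iff_dvd_diff)
        moreover have "p - r \<in> {1..h}" using False r hp by simp
        ultimately show ?thesis by blast
      qed
    qed
  next
    show "(\<lambda>a. fvert p a 0) ` {1..h} \<subseteq> {v \<in> fverts p. is_pole p v}"
    proof
      fix v assume "v \<in> (\<lambda>a. fvert p a 0) ` {1..h}"
      then obtain a where a: "a \<in> {1..h}" "v = fvert p a 0" by blast
      have "0 < a" "a < p" using a hp by auto
      then have "\<not> p dvd a" "a mod p \<noteq> 0" using small_ndvd[of p a] by (auto simp: dvd_eq_mod_eq_0)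
      then show "v \<in> {v \<in> fverts p. is_pole p v}" unfolding a(2) is_pole_def by (auto simp: fverts_iff)
    qed
  qed
  have inj: "inj_on (\<lambda>a. fvert p a 0) {1..h}"
  proof
    fix a b assume ab: "a \<in> {1..h}" "b \<in> {1..h}" "fvert p a 0 = fvert p b 0"
    then have "p dvd a - b \<or> p dvd -a - b" by (simp add: fvert_eq_iff cong_iff_dvd_diff)
    then show "a = b"
    proof
      assume d: "p dvd a - b"
      show "a = b"
      proof (rule ccontr)
        assume "a \<noteq> b"
        then have "0 < a - b \<or> 0 < b - a" by linarith
        moreover have "p dvd b - a" using d by (metis dvd_minus_iff minus_diff_eq)
        moreover have "a - b < p" "b - a < p" using ab hp by auto
        ultimately show False using d small_ndvd by blast
      qed
    next
      assume d: "p dvd -a - b"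
      have "p dvd a + b" using d by (metis dvd_minus_iff minus_diff_eq diff_minus_eq_add minus_add_distrib add.commute uminus_add_conv_diff)
      moreover have "0 < a + b" "a + b < p" using ab hp by auto
      ultimately show "a = b" using small_ndvd by blast
    qed
  qed
  have "card {v \<in> fverts p. is_pole p v} = nat h" unfolding eq using card_image[OF inj] by simp
  then show ?thesis using hp unfolding h_def by simp
qed


lemma concat_len_uniform: "(\<forall>k \<in> set ks. length (f k) = n) \<Longrightarrow> length (concat (map f ks)) = length ks * n"
  by (induction ks) auto

lemma concat_nth_uniform:
  "(\<forall>k \<in> set ks. length (f k) = n) \<Longrightarrow> j < length ks * n \<Longrightarrow>
   concat (map f ks) ! j = f (ks ! (j div n)) ! (j mod n)"
proof (induction ks arbitrary: j)
  case Nil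
  then show ?case by simp
next
  case (Cons a ks)
  have la: "length (f a) = n" using Cons.prems by simp
  have n0: "0 < n" using Cons.prems(2) by (cases n) auto
  show ?case
  proof (cases "j < n")
    case True
    then show ?thesis using la by (simp add: nth_append)
  next
    case False
    then have "j - n < length ks * n" using Cons.prems(2) by simp
    then have IH: "concat (map f ks) ! (j - n) = f (ks ! ((j - n) div n)) ! ((j - n) mod n)"
      using Cons.IH Cons.prems(1) by simp
    have "j div n = Suc ((j - n) div n)" using le_div_geq[of n j] n0 False by simp
    moreover have "j mod n = (j - n) mod n" using le_mod_geq[of n j] False by simp
    ultimately show ?thesis using IH la False by (simp add: nth_append)
  qed
qed

definition Lnth :: "int \<Rightarrow> nat \<Rightarrow> int \<times> int" where
  "Lnth h i = (if int i < h - 1 then (1, h - int i) else (int i - h + 3, int i - h + 4))"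

lemma Spairs_len: "(p - 1) div 2 \<ge> 2 \<Longrightarrow> length (Spairs p) = nat (2*((p-1) div 2) - 3)"
  unfolding Spairs_def by simp

lemma Spairs_nth:
  assumes "h = (p - 1) div 2" "h \<ge> 2" "i < nat (2*h - 3)"
  shows "Spairs p ! i = Lnth h i"
proof -
  have sp: "Spairs p = map (\<lambda>k. (1, k)) (rev [2..h]) @ map (\<lambda>m. (m - 1, m)) [3..h]"
    unfolding Spairs_def assms(1) ..
  have la: "length (map (\<lambda>k. (1::int, k)) (rev [2..h])) = nat (h - 1)" by simp
  show ?thesis
  proof (cases "int i < h - 1")
    case True
    then have il: "i < nat (h - 1)" by linarith
    have "rev [2..h] ! i = [2..h] ! (nat (h - 1) - Suc i)" using il by (simp add: rev_nth)
    also have "\<dots> = 2 + int (nat (h - 1) - Suc i)" using il by (intro nth_upto) linarith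
    also have "\<dots> = h - int i" using il by linarith
    finally show ?thesis unfolding sp Lnth_def using True il la by (simp add: nth_append)
  next
    case False
    then have il: "\<not> i < nat (h - 1)" by linarith
    have "[3..h] ! (i - nat (h - 1)) = 3 + int (i - nat (h - 1))" using il assms(3) by (intro nth_upto) linarith
    also have "\<dots> = int i - h + 4" using il assms(2) by linarith
    finally show ?thesis unfolding sp Lnth_def using False il la assms(3) by (simp add: nth_append)
  qed
qed

lemma Lnth_snd: "h \<ge> 2 \<Longrightarrow> i < nat (2*h - 3) \<Longrightarrow> 2 \<le> snd (Lnth h i) \<and> snd (Lnth h i) \<le> h"
  unfolding Lnth_def by auto

lemma Lnth_det:
  assumes "h \<ge> 2" "Suc i < nat (2*h - 3)"
  shows "fst (Lnth h i) * snd (Lnth h (Suc i)) - fst (Lnth h (Suc i)) * snd (Lnth h i) = -1"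
proof -
  consider "int i + 1 < h - 1" | "int i + 1 = h - 1" | "int i \<ge> h - 1" by linarith
  then show ?thesis
  proof cases
    case 1
    then show ?thesis unfolding Lnth_def by simp
  next
    case 2
    then have "Lnth h i = (1, 2)" "Lnth h (Suc i) = (2, 3)" unfolding Lnth_def by auto
    then show ?thesis by simp
  next
    case 3
    then have "Lnth h i = (int i - h + 3, int i - h + 4)" "Lnth h (Suc i) = (int i - h + 4, int i - h + 5)"
      unfolding Lnth_def by auto
    then show ?thesis by (simp add: algebra_simps)
  qed
qed

lemma Lnth_last: "h \<ge> 2 \<Longrightarrow> Lnth h (nat (2*h - 3) - 1) = (h - 1, h)"
  unfolding Lnth_def by auto

lemma Lnth_0: "h \<ge> 2 \<Longrightarrow> Lnth h 0 = (1, h)"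
  unfolding Lnth_def by auto


lemma S2_len_nth:
  assumes "prime (p::int)" "p \<ge> 5"
  defines "h \<equiv> (p - 1) div 2"
  defines "n \<equiv> nat (2*h - 3)"
  shows "length (S2 p) = nat p * n"
    and "\<And>j. j < nat p * n \<Longrightarrow> S2 p ! j =
           fvert p (fst (Lnth h (j mod n)) + int (j div n) * snd (Lnth h (j mod n))) (snd (Lnth h (j mod n)))"
proof -
  have h2: "h \<ge> 2" using hbound[OF assms(1,2)] unfolding h_def by simp
  define f where "f = (\<lambda>k. map (\<lambda>(x, c). fvert p (x + k * c) c) (Spairs p))"
  have S: "S2 p = concat (map f [0..p-1])" unfolding S2_def f_def ..
  have lf: "\<forall>k \<in> set [0..p-1]. length (f k) = n" unfolding f_def n_def h_def
    using Spairs_len h2 h_def by simp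
  have lk: "length [0..p-1] = nat p" by simp
  show "length (S2 p) = nat p * n" unfolding S using concat_len_uniform[OF lf] lk by simp
  fix j assume j: "j < nat p * n"
  have n0: "0 < n" using j by (cases n) auto
  have jd: "j div n < nat p" using j by (simp add: less_mult_imp_div_less)
  have jm: "j mod n < n" using n0 by simp
  have "S2 p ! j = f ([0..p-1] ! (j div n)) ! (j mod n)"
    unfolding S using concat_nth_uniform[OF lf] j lk by simp
  also have "[0..p-1] ! (j div n) = int (j div n)" using nth_upto[of 0 "j div n" "p-1"] jd by simp
  also have "f (int (j div n)) ! (j mod n) = (\<lambda>(x, c). fvert p (x + int (j div n) * c) c) (Spairs p ! (j mod n))"
    unfolding f_def using jm Spairs_len[of p] h2 unfolding n_def h_def by simp
  also have "Spairs p ! (j mod n) = Lnth h (j mod n)" using Spairs_nth[OF meta_eq_to_obj_eq[OF h_def] h2] jm unfolding n_def by simp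
  finally show "S2 p ! j =
           fvert p (fst (Lnth h (j mod n)) + int (j div n) * snd (Lnth h (j mod n))) (snd (Lnth h (j mod n)))"
    by (simp add: case_prod_beta)
qed

lemma fadjS:
  assumes "prime (p::int)" "p \<ge> 5" "2 \<le> c" "c \<le> (p-1) div 2" "2 \<le> d" "d \<le> (p-1) div 2"
    "p dvd (a*d - b*c - 1) \<or> p dvd (a*d - b*c + 1)"
  shows "fadj p (fvert p a c) (fvert p b d)"
proof -
  have hp: "p = 2*((p-1) div 2) + 1" using hbound assms by blast
  have "0 < c" "c < p" "0 < d" "d < p" using assms hp by linarith+
  then have "\<not> p dvd c" "\<not> p dvd d" using small_ndvd[of p c] small_ndvd[of p d] by blast+
  then show ?thesis using fadjI assms(7) by blast
qed

lemma S2_circuit: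
  assumes "prime (p::int)" "p \<ge> 5"
  shows "farey_circuit p (S2 p)"
proof -
  define h where "h = (p - 1) div 2"
  define n where "n = nat (2*h - 3)"
  have h2: "h \<ge> 2" and hp: "p = 2*h+1" using hbound[OF assms(1,2)] unfolding h_def by simp_all
  have n0: "0 < n" unfolding n_def using h2 by simp
  define M where "M = nat p * n"
  have len: "length (S2 p) = M" using S2_len_nth(1)[OF assms] unfolding M_def n_def h_def .
  have nth: "S2 p ! j = fvert p (fst (Lnth h (j mod n)) + int (j div n) * snd (Lnth h (j mod n))) (snd (Lnth h (j mod n)))"
    if "j < M" for j using S2_len_nth(2)[OF assms] that unfolding M_def n_def h_def by blast
  have M0: "0 < M" unfolding M_def using n0 assms(2) by simp
  have ne: "S2 p \<noteq> []" using len M0 by auto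
  have sub: "set (S2 p) \<subseteq> fverts p" using S2_fwd[OF assms] by blast
  have adj: "fadj p (S2 p ! j) (S2 p ! (Suc j mod length (S2 p)))" if j: "j < length (S2 p)" for j
  proof -
    define q where "q = j div n"
    define i where "i = j mod n"
    have jM: "j < M" using j len by simp
    have qp: "q < nat p" unfolding q_def using jM unfolding M_def by (simp add: less_mult_imp_div_less)
    have iN: "i < n" unfolding i_def using n0 by simp
    have jeq: "j = q * n + i" unfolding q_def i_def by simp
    have Sj: "S2 p ! j = fvert p (fst (Lnth h i) + int q * snd (Lnth h i)) (snd (Lnth h i))"
      using nth[OF jM] unfolding q_def i_def .
    have ci: "2 \<le> snd (Lnth h i) \<and> snd (Lnth h i) \<le> h" using Lnth_snd h2 iN unfolding n_def by blast
    consider (A) "Suc i < n" | (B) "Suc i = n" "Suc q < nat p" | (C) "Suc i = n" "Suc q = nat p"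
      using iN qp by linarith
    then show ?thesis
    proof cases
      case A
      have sj: "Suc j = q * n + Suc i" using jeq by simp
      have "Suc j < M" unfolding M_def sj
      proof -
        have "q * n + Suc i < q * n + n" using A by simp
        also have "\<dots> = Suc q * n" by simp
        also have "\<dots> \<le> nat p * n" using qp by (intro mult_right_mono) auto
        finally show "q * n + Suc i < nat p * n" .
      qed
      then have m: "Suc j mod length (S2 p) = Suc j" using len by simp
      have sj2: "Suc j = Suc i + q * n" using jeq by simp
      have nz: "n \<noteq> 0" using A by simp
      have e1: "(Suc i + q * n) div n = q + Suc i div n" by (rule div_mult_self1[OF nz])
      have e2: "(Suc i + q * n) mod n = Suc i mod n" by (rule mod_mult_self1)
      have dm: "Suc j div n = q" "Suc j mod n = Suc i" unfolding sj2 e1 e2 using A by simp_all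
      have S': "S2 p ! Suc j = fvert p (fst (Lnth h (Suc i)) + int q * snd (Lnth h (Suc i))) (snd (Lnth h (Suc i)))"
        using nth[OF \<open>Suc j < M\<close>] unfolding dm .
      have ci': "2 \<le> snd (Lnth h (Suc i)) \<and> snd (Lnth h (Suc i)) \<le> h" using Lnth_snd h2 A unfolding n_def by blast
      have D: "fst (Lnth h i) * snd (Lnth h (Suc i)) - fst (Lnth h (Suc i)) * snd (Lnth h i) = -1"
        using Lnth_det h2 A unfolding n_def by blast
      have "(fst (Lnth h i) + int q * snd (Lnth h i)) * snd (Lnth h (Suc i)) -
            (fst (Lnth h (Suc i)) + int q * snd (Lnth h (Suc i))) * snd (Lnth h i) =
            fst (Lnth h i) * snd (Lnth h (Suc i)) - fst (Lnth h (Suc i)) * snd (Lnth h i)"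
        by (simp add: algebra_simps)
      then have "p dvd ((fst (Lnth h i) + int q * snd (Lnth h i)) * snd (Lnth h (Suc i)) -
            (fst (Lnth h (Suc i)) + int q * snd (Lnth h (Suc i))) * snd (Lnth h i) + 1)" using D by simp
      then show ?thesis unfolding m Sj S' using fadjS[OF assms] ci ci' unfolding h_def by blast
    next
      case B
      have sj: "Suc j = Suc q * n" using jeq B by simp
      have "Suc q * n < nat p * n" using B n0 by (intro mult_strict_right_mono) auto
      then have "Suc j < M" unfolding M_def sj .
      then have m: "Suc j mod length (S2 p) = Suc j" using len by simp
      have dm: "Suc j div n = Suc q" "Suc j mod n = 0" unfolding sj using n0 by simp_all
      have S': "S2 p ! Suc j = fvert p (1 + int (Suc q) * h) h"
        using nth[OF \<open>Suc j < M\<close>] unfolding dm using Lnth_0[OF h2] by simp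
      have ii: "i = nat (2*h - 3) - 1" using B unfolding n_def by simp
      have Li: "Lnth h i = (h - 1, h)" unfolding ii using Lnth_last[OF h2] .
      have "(h - 1 + int q * h) * h - (1 + int (Suc q) * h) * h - 1 = - p"
        unfolding hp by (simp add: algebra_simps)
      then have "p dvd (h - 1 + int q * h) * h - (1 + int (Suc q) * h) * h - 1" by simp
      then show ?thesis unfolding m Sj S' Li using fadjS[OF assms, of h h] h2 unfolding h_def by simp
    next
      case C
      have "Suc j = Suc q * n" using jeq C(1) by simp
      then have sj: "Suc j = M" unfolding M_def C(2) .
      then have m: "Suc j mod length (S2 p) = 0" using len by simp
      have S': "S2 p ! 0 = fvert p 1 h"
        using nth[OF M0] using Lnth_0[OF h2] n0 by simp
      have ii: "i = nat (2*h - 3) - 1" using C unfolding n_def by simp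
      have Li: "Lnth h i = (h - 1, h)" unfolding ii using Lnth_last[OF h2] .
      have qq: "int q = 2 * h" using C hp by linarith
      have "(h - 1 + int q * h) * h - 1 * h - 1 = p * (h*h - 1)"
        unfolding qq hp by (simp add: algebra_simps)
      then have "p dvd (h - 1 + int q * h) * h - 1 * h - 1" by simp
      then show ?thesis unfolding m Sj S' Li using fadjS[OF assms, of h h] h2 unfolding h_def by simp
    qed
  qed
  show ?thesis unfolding farey_circuit_def using ne sub adj by blast
qed

theorem theorem2:
  fixes p :: int
  assumes "prime p" and "p \<ge> 5"
  defines "N \<equiv> fvert p 1 0"
  shows "((\<forall>v \<in> set (S2 p). v \<in> fverts p \<and> fdist_is p N v 2)
       \<and> (\<forall>v \<in> fverts p. fdist_is p N v 2 \<longrightarrow> v \<in> set (S2 p)))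
     \<and> farey_circuit p (S2 p)
     \<and> (farey_circuit p (S1 p) \<and> int (length (S1 p)) = p
       \<and> set (S1 p) = {v \<in> fverts p. fdist_is p N v 1}
       \<and> int (length (S2 p)) = p * (p - 4))
     \<and> int (card {v \<in> fverts p. is_pole p v}) = (p - 1) div 2"
proof -
  have i1: "\<forall>v \<in> set (S2 p). v \<in> fverts p \<and> fdist_is p N v 2"
    using S2_fwd[OF assms(1,2)] unfolding N_def by blast
  have i2: "\<forall>v \<in> fverts p. fdist_is p N v 2 \<longrightarrow> v \<in> set (S2 p)"
    using S2_bwd[OF assms(1,2)] unfolding N_def by blast
  have l1: "int (length (S1 p)) = p" using S1_len[of p] assms(2) by simp
  have hp: "p = 2*((p-1) div 2) + 1" "(p-1) div 2 \<ge> 2" using hbound[OF assms(1,2)] by simp_all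
  have "length (S2 p) = nat p * nat (2*((p-1) div 2) - 3)" using S2_len_nth(1)[OF assms(1,2)] by simp
  then have l2: "int (length (S2 p)) = p * (p - 4)" using hp assms(2) by simp
  show ?thesis using i1 i2 S2_circuit[OF assms(1,2)] S1_circuit[OF assms(1,2)] l1
      S1_set[OF assms(1,2)] l2 poles[OF assms(1,2)] unfolding N_def by blast
qed

end
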